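(* Let $f\in\mathcal G$. Then for almost every $x>0$, $$Pf(x)=T_{f'}\rho_1(x)=\int_0^\infty\rho_1(xt^{-1})f'(t)\,dt=\int_0^\infty\rho(t/x)f'(t)\,dt,$$ and for every $1<p<\infty$, $$\|Pf\|_p\le\nu_{1/p}(f')\,\|\rho_1\|_p<\infty.$$ Consequently $Pf\in L_p(0,\infty)$ for all $1<p\le\infty$.
   Context: A good kernel is a continuously differentiable function $f:[0,\infty)\to\mathbb C$ with $f(x)\to0$ as $x\to\infty$, $f\in L_1(0,\infty)$, and $\int_0^\infty t|f'(t)|\,dt<\infty$; $\mathcal G$ denotes the class of good kernels. For $f\in\mathcal G$, $Pf(x):=\sum_{n=1}^\infty f(nx)-\frac1x\int_0^\infty f(t)\,dt$ (defined a.e.). $\rho(x)=x-\lfloor x\rfloor$ is the fractional part and $\rho_1(x):=\rho(1/x)$; $\rho_1\in L_p(0,\infty)$ for $1<p\le\infty$. For measurable $F,G$ on $(0,\infty)$, $T_FG(x):=\int_0^\infty G(xt^{-1})F(t)\,dt$, and $\nu_\sigma(F):=\int_0^\infty t^\sigma|F(t)|\,dt$. *)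

theory Defs
  imports "HOL-Analysis.Analysis"
begin

definition good_kernel :: "(real \<Rightarrow> complex) \<Rightarrow> (real \<Rightarrow> complex) \<Rightarrow> bool" where
  "good_kernel f f' \<longleftrightarrow>
     (\<forall>t\<ge>0. (f has_vector_derivative f' t) (at t within {0..})) \<and>
     continuous_on {0..} f' \<and>
     (f \<longlongrightarrow> 0) at_top \<and>
     set_integrable lebesgue {0<..} f \<and>
     set_integrable lebesgue {0<..} (\<lambda>t. t * norm (f' t))"

text \<open>rho is the fractional part (library frac); rho_1(x) = rho(1/x).\<close>
definition rho1 :: "real \<Rightarrow> real" where
  "rho1 x = frac (1 / x)"

definition Pf :: "(real \<Rightarrow> complex) \<Rightarrow> real \<Rightarrow> complex" where
  "Pf f x = (\<Sum>n. f (real (Suc n) * x)) - complex_of_real (1 / x) * (LINT t:{0<..}|lebesgue. f t)"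

definition T_op :: "(real \<Rightarrow> complex) \<Rightarrow> (real \<Rightarrow> real) \<Rightarrow> real \<Rightarrow> complex" where
  "T_op F G x = (LINT t:{0<..}|lebesgue. complex_of_real (G (x / t)) * F t)"

definition nu :: "real \<Rightarrow> (real \<Rightarrow> complex) \<Rightarrow> real" where
  "nu \<sigma> F = (LINT t:{0<..}|lebesgue. t powr \<sigma> * norm (F t))"

definition Lp_norm :: "real \<Rightarrow> (real \<Rightarrow> 'a::real_normed_vector) \<Rightarrow> real" where
  "Lp_norm p g = (LINT x:{0<..}|lebesgue. norm (g x) powr p) powr (1 / p)"

end

theory Submission
  imports Defs "HOL-Analysis.Analysis"
begin

lemma gk_basic:
  assumes "good_kernel f f'"
  shows gk_cont: "continuous_on {0..} f"
    and gk_f'cont: "continuous_on {0..} f'"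
    and gk_fabs: "f absolutely_integrable_on {0<..}"
    and gk_tf': "(\<lambda>t. t * norm (f' t)) absolutely_integrable_on {0<..}"
    and gk_deriv: "\<And>t. t \<ge> 0 \<Longrightarrow> (f has_vector_derivative f' t) (at t within {0..})"
    and gk_lim: "(f \<longlongrightarrow> 0) at_top"
proof -
  show d: "\<And>t. t \<ge> 0 \<Longrightarrow> (f has_vector_derivative f' t) (at t within {0..})"
    using assms unfolding good_kernel_def by auto
  show "continuous_on {0..} f'" "f absolutely_integrable_on {0<..}"
       "(\<lambda>t. t * norm (f' t)) absolutely_integrable_on {0<..}" "(f \<longlongrightarrow> 0) at_top"
    using assms unfolding good_kernel_def by auto
  show "continuous_on {0..} f"
    unfolding continuous_on_eq_continuous_within
    using d has_vector_derivative_continuous by (metis atLeast_iff)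
qed

lemma gk_f'_bounded:
  assumes "good_kernel f f'"
  obtains B where "B \<ge> 0" "\<And>t. t \<in> {0..1} \<Longrightarrow> norm (f' t) \<le> B"
proof -
  have "compact (f' ` {0..1})"
    by (rule compact_continuous_image) (auto intro: continuous_on_subset[OF gk_f'cont[OF assms]])
  then obtain B where "\<forall>y\<in>f' ` {0..1}. norm y \<le> B"
    using compact_imp_bounded bounded_iff by metis
  then show ?thesis using that[of "max B 0"] by force
qed

lemma gk_f'_abs:
  assumes "good_kernel f f'" and a: "0 \<le> a" "a \<le> 1"
  shows "(\<lambda>t. t powr a * norm (f' t)) absolutely_integrable_on {0<..}"
    and "f' absolutely_integrable_on {0<..}"
proof -
  obtain B where B: "B \<ge> 0" "\<And>t. t \<in> {0..1} \<Longrightarrow> norm (f' t) \<le> B"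
    using gk_f'_bounded[OF assms(1)] by blast
  have ti: "(\<lambda>t. t * norm (f' t)) integrable_on {0<..}"
    using gk_tf'[OF assms(1)] set_lebesgue_integral_eq_integral(1) by blast
  have ii: "(\<lambda>t::real. if t \<in> {0<..1} then B else 0) integrable_on {0<..}"
  proof -
    have "(\<lambda>t. B) integrable_on {0<..1::real}"
      proof (rule integrable_on_const)
      have "({0..1::real} - {0<..1}) \<union> ({0<..1} - {0..1}) = {0}" by auto
      then have "negligible (({0..1::real} - {0<..1}) \<union> ({0<..1} - {0..1}))"
        by (simp only: negligible_sing)
      then show "{0<..1::real} \<in> lmeasurable"
        by (rule lmeasurable_negligible_symdiff[rotated]) simp
    qed
    then show ?thesis
    proof -
      have eq: "{0<..1::real} \<inter> {0<..} = {0<..1}" by auto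
      show ?thesis using \<open>(\<lambda>t. B) integrable_on {0<..1::real}\<close>
        unfolding integrable_restrict_Int eq .
    qed
  qed
  have gi: "(\<lambda>t. t * norm (f' t) + (if t \<in> {0<..1} then B else 0)) integrable_on {0<..}"
    using integrable_add[OF ti ii] by simp
  have cont: "continuous_on {0<..} f'"
    by (rule continuous_on_subset[OF gk_f'cont[OF assms(1)]]) auto
  have bnd: "norm (f' t) \<le> t * norm (f' t) + (if t \<in> {0<..1} then B else 0)" if "t > 0" for t
  proof (cases "t \<le> 1")
    case True
    have a: "0 \<le> t * norm (f' t)" using that by simp
    have b: "norm (f' t) \<le> B" using B(2)[of t] that True by auto
    have "(if t \<in> {0<..1} then B else 0) = B" using that True by simp
    then show ?thesis using a b by linarith
  next
    case False then show ?thesis by (simp add: mult_le_cancel_right1)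
  qed
  show "f' absolutely_integrable_on {0<..}"
    by (rule measurable_bounded_by_integrable_imp_absolutely_integrable[OF _ _ gi])
       (use continuous_imp_measurable_on_sets_lebesgue[OF cont] bnd in auto)
  have cont2: "continuous_on {0<..} (\<lambda>t. t powr a * norm (f' t))"
    by (intro continuous_intros cont) auto
  have bnd2: "norm (t powr a * norm (f' t)) \<le> t * norm (f' t) + (if t \<in> {0<..1} then B else 0)" if "t > 0" for t
  proof (cases "t \<le> 1")
    case True
    have "t powr a \<le> 1" using True that a powr_mono2[of a t 1] by simp
    then have "t powr a * norm (f' t) \<le> 1 * B" using B(2)[of t] that True
      by (intro mult_mono) auto
    moreover have "0 \<le> t * norm (f' t)" using that by simp
    moreover have "(if t \<in> {0<..1} then B else 0) = B" using that True by simp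
    moreover have "0 \<le> t powr a * norm (f' t)" by simp
    ultimately show ?thesis by (simp only: real_norm_def abs_of_nonneg)
  next
    case False
    have "t powr a \<le> t powr 1" using False a by (intro powr_mono) auto
    then have "t powr a * norm (f' t) \<le> t * norm (f' t)" using False by (intro mult_right_mono) auto
    then show ?thesis using False by simp
  qed
  show "(\<lambda>t. t powr a * norm (f' t)) absolutely_integrable_on {0<..}"
    by (rule measurable_bounded_by_integrable_imp_absolutely_integrable[OF _ _ gi])
       (use continuous_imp_measurable_on_sets_lebesgue[OF cont2] bnd2 in auto)
qed

lemma gk_piece:
  assumes gk: "good_kernel f f'" and x: "x > 0"
  shows "((\<lambda>t. frac (t / x) *\<^sub>R f' t) has_integral
           (f ((real k + 1) * x) - (1 / x) *\<^sub>R integral {real k * x..(real k + 1) * x} f))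
          {real k * x..(real k + 1) * x}"
proof -
  define a where "a = real k * x"
  define b where "b = (real k + 1) * x"
  have ab: "0 \<le> a" "a \<le> b" using x by (auto simp: a_def b_def)
  define g where "g t = (t / x - real k) *\<^sub>R f t" for t
  have der: "(g has_vector_derivative ((t / x - real k) *\<^sub>R f' t + (1 / x) *\<^sub>R f t)) (at t within {a..b})"
    if t: "t \<in> {a..b}" for t
  proof -
    have d1: "((\<lambda>t. t / x - real k) has_field_derivative (1 / x)) (at t within {a..b})"
      using x by (auto intro!: derivative_eq_intros)
    have d2: "(f has_vector_derivative f' t) (at t within {a..b})"
    proof (rule has_vector_derivative_within_subset[OF gk_deriv[OF gk]])
      show "0 \<le> t" using t ab by auto
      show "{a..b} \<subseteq> {0..}" using ab by auto
    qed
    show ?thesis unfolding g_def using has_vector_derivative_scaleR[OF d1 d2] by simp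
  qed
  have ftc: "((\<lambda>t. (t / x - real k) *\<^sub>R f' t + (1 / x) *\<^sub>R f t) has_integral (g b - g a)) {a..b}"
    by (rule fundamental_theorem_of_calculus[OF ab(2) der])
  have gb: "g b = f b" using x by (simp add: g_def b_def)
  have ga: "g a = 0" using x by (simp add: g_def a_def)
  have fint: "f integrable_on {a..b}"
    by (rule integrable_continuous_interval, rule continuous_on_subset[OF gk_cont[OF gk]]) (use ab in auto)
  have fint2: "((\<lambda>t. (1 / x) *\<^sub>R f t) has_integral ((1 / x) *\<^sub>R integral {a..b} f)) {a..b}"
    by (intro has_integral_cmul integrable_integral fint)
  have h1: "((\<lambda>t. (t / x - real k) *\<^sub>R f' t) has_integral (f b - (1 / x) *\<^sub>R integral {a..b} f)) {a..b}"
    using has_integral_diff[OF ftc fint2] gb ga by simp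
  have eqv: "frac (t / x) *\<^sub>R f' t = (t / x - real k) *\<^sub>R f' t" if "t \<in> {a..b} - {b}" for t
  proof -
    have "real k \<le> t / x" "t / x < real k + 1" using that x
      by (auto simp: a_def b_def field_simps)
    then have "floor (t / x) = int k" by (intro floor_unique) auto
    then show ?thesis by (simp add: frac_def)
  qed
  show ?thesis
    using has_integral_spike_finite[where S="{b}", OF _ eqv h1] by (simp add: a_def b_def)
qed

lemma borel_to_lebesgue_on:
  assumes "f \<in> borel_measurable borel"
  shows "f \<in> borel_measurable (lebesgue_on S)"
  by (rule measurable_restrict_space1, rule measurable_completion) (use assms in simp)

lemma borel_to_lebesgue:
  assumes "f \<in> borel_measurable borel"
  shows "f \<in> borel_measurable lebesgue"
  by (rule measurable_completion) (use assms in simp)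

lemma frac_div_measurable: "(\<lambda>t::real. frac (t / x)) \<in> borel_measurable borel"
  unfolding frac_def by measurable

lemma gk_partial:
  assumes gk: "good_kernel f f'" and x: "x > 0"
  shows "((\<lambda>t. frac (t / x) *\<^sub>R f' t) has_integral
           ((\<Sum>k<N. f ((real k + 1) * x)) - (1 / x) *\<^sub>R integral {0..real N * x} f))
          {0..real N * x}"
proof (induction N)
  case 0
  then show ?case by (auto intro: has_integral_null_real)
next
  case (Suc N)
  have fint: "f integrable_on {0..real (Suc N) * x}"
    by (rule integrable_continuous_interval, rule continuous_on_subset[OF gk_cont[OF gk]]) auto
  have le: "0 \<le> real N * x" "real N * x \<le> real (Suc N) * x" using x by auto
  have c: "integral {0..real N * x} f + integral {real N * x..(real N + 1) * x} f
           = integral {0..real (Suc N) * x} f"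
    using Henstock_Kurzweil_Integration.integral_combine[OF le fint] by (simp add: algebra_simps)
  have sn: "real (Suc N) = real N + 1" by simp
  have p: "((\<lambda>t. frac (t / x) *\<^sub>R f' t) has_integral
           (f ((real N + 1) * x) - (1 / x) *\<^sub>R integral {real N * x..(real N + 1) * x} f))
          {real N * x..real (Suc N) * x}"
    unfolding sn by (rule gk_piece[OF gk x])
  have comb: "((\<lambda>t. frac (t / x) *\<^sub>R f' t) has_integral
          (((\<Sum>k<N. f ((real k + 1) * x)) - (1 / x) *\<^sub>R integral {0..real N * x} f) +
           (f ((real N + 1) * x) - (1 / x) *\<^sub>R integral {real N * x..(real N + 1) * x} f)))
        {0..real (Suc N) * x}"
    by (rule has_integral_combine[OF le Suc.IH p])
  have eq2: "((\<Sum>k<N. f ((real k + 1) * x)) - (1 / x) *\<^sub>R integral {0..real N * x} f) +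
           (f ((real N + 1) * x) - (1 / x) *\<^sub>R integral {real N * x..(real N + 1) * x} f)
        = (\<Sum>k<Suc N. f ((real k + 1) * x)) - (1 / x) *\<^sub>R integral {0..real (Suc N) * x} f"
    using c[symmetric] by (simp add: algebra_simps scaleR_add_right)
  show ?case using comb unfolding eq2 .
qed

lemma int_tail_lim:
  fixes u :: "real \<Rightarrow> 'b::euclidean_space"
  assumes u: "u absolutely_integrable_on {0<..}" and x: "x > 0"
  shows "(\<lambda>N. integral {0..real N * x} u) \<longlonglongrightarrow> integral {0<..} u"
proof -
  define v where "v N t = (if t \<in> {0<..real N * x} then u t else 0)" for N t
  have eqi: "integral {0<..} (v N) = integral {0..real N * x} u" for N
  proof -
    have "integral {0<..} (v N) = integral ({0<..real N * x} \<inter> {0<..}) u"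
      unfolding v_def by (rule integral_restrict_Int)
    also have "{0<..real N * x} \<inter> {0<..} = {0<..real N * x}" by auto
    also have "integral {0<..real N * x} u = integral {0..real N * x} u"
      by (rule integral_subset_negligible) (auto intro: negligible_subset[OF negligible_sing[of 0]])
    finally show ?thesis .
  qed
  have vi: "v N integrable_on {0<..}" for N
  proof -
    have "u absolutely_integrable_on {0<..real N * x}"
      by (rule set_integrable_subset[OF u]) auto
    then have "u integrable_on {0<..real N * x} \<inter> {0<..}"
      using set_lebesgue_integral_eq_integral(1) by (metis Int_absorb2 greaterThanAtMost_iff greaterThan_iff subsetI)
    then show ?thesis unfolding v_def integrable_restrict_Int .
  qed
  have hi: "(\<lambda>t. norm (u t)) integrable_on {0<..}"
    using u absolutely_integrable_on_def by blast
  have conv: "(\<lambda>N. v N t) \<longlonglongrightarrow> u t" if "t \<in> {0<..}" for t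
  proof (rule tendsto_eventually)
    obtain n where n: "t < real n * x" using reals_Archimedean3[OF x] by blast
    show "\<forall>\<^sub>F N in sequentially. v N t = u t"
      unfolding eventually_sequentially
    proof (intro exI allI impI)
      fix N assume "n \<le> N"
      then have "real n * x \<le> real N * x" using x by (intro mult_right_mono) auto
      then show "v N t = u t" using n that by (auto simp: v_def)
    qed
  qed
  have "(\<lambda>N. integral {0<..} (v N)) \<longlonglongrightarrow> integral {0<..} u"
    by (rule dominated_convergence(2)[OF vi hi _ conv]) (auto simp: v_def)
  then show ?thesis unfolding eqi .
qed

lemma gk_pointwise:
  assumes gk: "good_kernel f f'" and x: "x > 0"
  shows "(\<lambda>t. frac (t / x) *\<^sub>R f' t) absolutely_integrable_on {0<..}"
    and "(\<lambda>n. f ((real n + 1) * x)) sums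
           (integral {0<..} (\<lambda>t. frac (t / x) *\<^sub>R f' t) + (1 / x) *\<^sub>R integral {0<..} f)"
proof -
  have f'a: "f' absolutely_integrable_on {0<..}" using gk_f'_abs(2)[OF gk, of 0] by simp
  have cont: "continuous_on {0<..} f'"
    by (rule continuous_on_subset[OF gk_f'cont[OF gk]]) auto
  have m1: "(\<lambda>t. frac (t / x) *\<^sub>R f' t) \<in> borel_measurable (lebesgue_on {0<..})"
    by (intro borel_measurable_scaleR borel_to_lebesgue_on frac_div_measurable
         continuous_imp_measurable_on_sets_lebesgue[OF cont]) auto
  show ha: "(\<lambda>t. frac (t / x) *\<^sub>R f' t) absolutely_integrable_on {0<..}"
  proof (rule measurable_bounded_by_integrable_imp_absolutely_integrable[OF m1])
    show "(\<lambda>t. norm (f' t)) integrable_on {0<..}" using f'a absolutely_integrable_on_def by blast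
    show "norm (frac (t / x) *\<^sub>R f' t) \<le> norm (f' t)" for t
      using frac_lt_1[of "t/x"] by (simp add: mult_left_le_one_le)
  qed auto
  have l1: "(\<lambda>N. integral {0..real N * x} (\<lambda>t. frac (t / x) *\<^sub>R f' t)) \<longlonglongrightarrow> integral {0<..} (\<lambda>t. frac (t / x) *\<^sub>R f' t)"
    by (rule int_tail_lim[OF ha x])
  have l2: "(\<lambda>N. integral {0..real N * x} f) \<longlonglongrightarrow> integral {0<..} f"
    by (rule int_tail_lim[OF gk_fabs[OF gk] x])
  have eq: "(\<Sum>k<N. f ((real k + 1) * x)) = integral {0..real N * x} (\<lambda>t. frac (t / x) *\<^sub>R f' t) + (1 / x) *\<^sub>R integral {0..real N * x} f" for N
    using integral_unique[OF gk_partial[OF gk x, of N]] by simp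
  show "(\<lambda>n. f ((real n + 1) * x)) sums
           (integral {0<..} (\<lambda>t. frac (t / x) *\<^sub>R f' t) + (1 / x) *\<^sub>R integral {0<..} f)"
    unfolding sums_def eq by (intro tendsto_intros l1 l2)
qed

lemma young_aux:
  fixes p m y :: real
  assumes p: "p > 1" and m: "m \<ge> 0" and y: "y \<ge> 0"
  shows "p * m powr (p - 1) * y \<le> y powr p + (p - 1) * m powr p"
proof -
  define q where "q = p / (p - 1)"
  have q1: "q > 1" using p by (simp add: q_def)
  have pq: "1 / p + 1 / q = 1" using p by (simp add: q_def field_simps)
  have "y * m powr (p - 1) \<le> y powr p / p + (m powr (p - 1)) powr q / q"
    by (rule Youngs_inequality[OF p q1 pq y]) simp
  also have "(m powr (p - 1)) powr q = m powr p"
    using p by (simp add: powr_powr q_def)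
  finally have "y * m powr (p - 1) \<le> y powr p / p + m powr p / q" .
  then have "p * (y * m powr (p - 1)) \<le> p * (y powr p / p + m powr p / q)"
    using p by (intro mult_left_mono) auto
  also have "p * (y powr p / p + m powr p / q) = y powr p + (p - 1) * m powr p"
    using p by (simp add: q_def field_simps)
  finally show ?thesis by (simp add: algebra_simps)
qed

lemma jensen_nn:
  fixes g w :: "'a \<Rightarrow> real" and p W G :: real
  assumes p: "p > 1"
    and gm: "g \<in> borel_measurable M" and wm: "w \<in> borel_measurable M"
    and g0: "\<And>t. g t \<ge> 0" and w0: "\<And>t. w t \<ge> 0"
    and W: "(\<integral>\<^sup>+ t. ennreal (w t) \<partial>M) = ennreal W" and W0: "W \<ge> 0"
    and G: "(\<integral>\<^sup>+ t. ennreal (g t * w t) \<partial>M) = ennreal G" and G0: "G \<ge> 0"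
  shows "ennreal (G powr p) \<le> ennreal (W powr (p - 1)) * (\<integral>\<^sup>+ t. ennreal (g t powr p * w t) \<partial>M)"
proof (cases "G = 0")
  case True
  then show ?thesis by simp
next
  case Gn0: False
  have Wpos: "W > 0"
  proof (rule ccontr)
    assume "\<not> W > 0"
    then have "W = 0" using W0 by auto
    then have "AE t in M. ennreal (w t) = 0"
      using W nn_integral_0_iff_AE[of "\<lambda>t. ennreal (w t)" M] wm by auto
    then have "AE t in M. ennreal (g t * w t) = 0"
    proof (rule AE_mp[OF _ AE_I2], intro impI)
      fix t assume "ennreal (w t) = 0"
      then have "w t = 0" using w0[of t] by (simp add: ennreal_eq_0_iff)
      then show "ennreal (g t * w t) = 0" by simp
    qed
    then have "(\<integral>\<^sup>+ t. ennreal (g t * w t) \<partial>M) = 0"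
      using nn_integral_0_iff_AE[of "\<lambda>t. ennreal (g t * w t)" M] gm wm by auto
    then have "G = 0" using G G0 by (simp add: ennreal_eq_0_iff)
    then show False using Gn0 by simp
  qed
  define m where "m = G / W"
  have m0: "m > 0" using Wpos G0 Gn0 by (simp add: m_def)
  have Gm: "G = m * W" using Wpos by (simp add: m_def)
  define I where "I = (\<integral>\<^sup>+ t. ennreal (g t powr p * w t) \<partial>M)"
  have pw: "ennreal (p * m powr (p - 1)) * ennreal (g t * w t)
        \<le> ennreal (g t powr p * w t) + ennreal ((p - 1) * m powr p) * ennreal (w t)" for t
  proof -
    have "p * m powr (p - 1) * g t * w t \<le> (g t powr p + (p - 1) * m powr p) * w t"
      using young_aux[OF p, of m "g t"] m0 g0[of t] w0[of t] by (intro mult_right_mono) auto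
    moreover have "p * m powr (p - 1) * g t * w t = p * m powr (p - 1) * (g t * w t)" by simp
    moreover have "(g t powr p + (p - 1) * m powr p) * w t = g t powr p * w t + (p - 1) * m powr p * w t"
      by (rule distrib_right)
    ultimately have r: "p * m powr (p - 1) * (g t * w t) \<le> g t powr p * w t + (p - 1) * m powr p * w t"
      by linarith
    have e: "ennreal (p * m powr (p - 1) * (g t * w t)) \<le> ennreal (g t powr p * w t + (p - 1) * m powr p * w t)"
      using r by (rule ennreal_leI)
    have a0: "0 \<le> p * m powr (p - 1)" "0 \<le> (p - 1) * m powr p" "0 \<le> g t * w t"
         "0 \<le> g t powr p * w t" "0 \<le> (p - 1) * m powr p * w t"
      using p g0[of t] w0[of t] by auto
    have l: "ennreal (p * m powr (p - 1)) * ennreal (g t * w t) = ennreal (p * m powr (p - 1) * (g t * w t))"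
      by (rule ennreal_mult[symmetric]) (use a0 in auto)
    have l2: "ennreal ((p - 1) * m powr p) * ennreal (w t) = ennreal ((p - 1) * m powr p * w t)"
      by (rule ennreal_mult[symmetric]) (use a0 w0 in auto)
    have rr: "ennreal (g t powr p * w t) + ennreal ((p - 1) * m powr p) * ennreal (w t)
          = ennreal (g t powr p * w t + (p - 1) * m powr p * w t)"
      unfolding l2 using a0 by simp
    show ?thesis unfolding l rr by (rule e)
  qed
  have "(\<integral>\<^sup>+ t. ennreal (p * m powr (p - 1)) * ennreal (g t * w t) \<partial>M)
        \<le> (\<integral>\<^sup>+ t. ennreal (g t powr p * w t) + ennreal ((p - 1) * m powr p) * ennreal (w t) \<partial>M)"
    by (rule nn_integral_mono) (rule pw)
  also have "\<dots> = I + ennreal ((p - 1) * m powr p) * ennreal W"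
    unfolding I_def using gm wm
    by (subst nn_integral_add) (auto simp: nn_integral_cmult W)
  finally have "ennreal (p * m powr (p - 1)) * ennreal G \<le> I + ennreal ((p - 1) * m powr p) * ennreal W"
    using gm wm by (subst (asm) nn_integral_cmult) (auto simp: G)
  then have ineq: "ennreal (p * m powr (p - 1) * G) \<le> I + ennreal ((p - 1) * m powr p * W)"
    using p m0 G0 W0 by (simp add: ennreal_mult)
  define A where "A = m powr p * W"
  have A0: "A \<ge> 0" using W0 by (simp add: A_def)
  have e1: "p * m powr (p - 1) * G = p * A"
  proof -
    have "m powr (p - 1) * m = m powr p"
      using m0 powr_add[of m "p - 1" 1] by simp
    then show ?thesis unfolding Gm A_def by (metis mult.assoc mult.commute)
  qed
  have AI: "ennreal A \<le> I"
  proof (cases I)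
    case (real i)
    have i0: "0 \<le> i" and Ii: "I = ennreal i" using real by auto
    have e2: "(p - 1) * m powr p * W = (p - 1) * A" by (simp add: A_def)
    have "ennreal (p * A) \<le> ennreal i + ennreal ((p - 1) * A)"
      using ineq unfolding e1 e2 Ii .
    also have "\<dots> = ennreal (i + (p - 1) * A)" using i0 A0 p by simp
    finally have "p * A \<le> i + (p - 1) * A"
      using i0 A0 p by (subst (asm) ennreal_le_iff) auto
    then have "A \<le> i" by (simp add: algebra_simps)
    then show ?thesis unfolding Ii by (rule ennreal_leI)
  next
    case top
    then show ?thesis by simp
  qed
  have "G powr p = W powr (p - 1) * A"
  proof -
    have "G powr p = m powr p * W powr p" unfolding Gm using m0 W0 by (simp add: powr_mult)
    also have "W powr p = W powr (p - 1) * W" using Wpos powr_add[of W "p - 1" 1] by simp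
    finally show ?thesis by (simp add: A_def)
  qed
  then have "ennreal (G powr p) = ennreal (W powr (p - 1)) * ennreal A"
    using A0 by (simp add: ennreal_mult)
  also have "\<dots> \<le> ennreal (W powr (p - 1)) * I"
    by (rule mult_left_mono[OF AI]) simp
  finally show ?thesis unfolding I_def .
qed

lemma set_integrable_nn_eq:
  fixes g :: "real \<Rightarrow> real"
  assumes gi: "set_integrable lebesgue S g" and g0: "\<And>x. x \<in> S \<Longrightarrow> g x \<ge> 0"
  shows "(\<integral>\<^sup>+ x. ennreal (indicator S x * g x) \<partial>lborel) = ennreal (LINT x:S|lebesgue. g x)"
proof -
  have i: "integrable lebesgue (\<lambda>x. indicator S x * g x)"
    using gi unfolding set_integrable_def by simp
  have "(\<integral>\<^sup>+ x. ennreal (indicator S x * g x) \<partial>lborel) = (\<integral>\<^sup>+ x. ennreal (indicator S x * g x) \<partial>lebesgue)"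
    by (simp add: nn_integral_completion)
  also have "\<dots> = ennreal (integral\<^sup>L lebesgue (\<lambda>x. indicator S x * g x))"
    by (rule nn_integral_eq_integral[OF i]) (use g0 in \<open>auto simp: indicator_def\<close>)
  also have "integral\<^sup>L lebesgue (\<lambda>x. indicator S x * g x) = (LINT x:S|lebesgue. g x)"
    unfolding set_lebesgue_integral_def by simp
  finally show ?thesis .
qed

lemma nn_to_set_integrable:
  fixes g :: "real \<Rightarrow> real"
  assumes gm: "(\<lambda>x. indicator S x * g x) \<in> borel_measurable lebesgue"
    and g0: "\<And>x. x \<in> S \<Longrightarrow> g x \<ge> 0"
    and fin: "(\<integral>\<^sup>+ x. ennreal (indicator S x * g x) \<partial>lborel) \<le> ennreal B"
  shows "set_integrable lebesgue S g"
    and "(\<integral>\<^sup>+ x. ennreal (indicator S x * g x) \<partial>lborel) = ennreal (LINT x:S|lebesgue. g x)"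
proof -
  have n: "norm (indicator S x * g x) = indicator S x * g x" for x
    using g0[of x] by (auto simp: indicator_def)
  have "integrable lebesgue (\<lambda>x. indicator S x * g x)"
  proof (rule integrableI_bounded[OF gm])
    have "(\<integral>\<^sup>+ x. ennreal (norm (indicator S x * g x)) \<partial>lebesgue) = (\<integral>\<^sup>+ x. ennreal (indicator S x * g x) \<partial>lborel)"
      unfolding n by (simp add: nn_integral_completion)
    also have "\<dots> < \<infinity>" using fin by (simp add: le_less_trans)
    finally show "(\<integral>\<^sup>+ x. ennreal (norm (indicator S x * g x)) \<partial>lebesgue) < \<infinity>" .
  qed
  then show si: "set_integrable lebesgue S g" unfolding set_integrable_def by simp
  show "(\<integral>\<^sup>+ x. ennreal (indicator S x * g x) \<partial>lborel) = ennreal (LINT x:S|lebesgue. g x)"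
    by (rule set_integrable_nn_eq[OF si g0])
qed

lemma rho1_measurable: "(\<lambda>u::real. indicator {0<..} u * frac (1 / u) powr p) \<in> borel_measurable borel"
  unfolding frac_def by measurable

lemma rho1_nn_finite:
  fixes p :: real
  assumes p: "p > 1"
  shows "(\<integral>\<^sup>+ u. ennreal (indicator {0<..} u * frac (1 / u) powr p) \<partial>lborel) \<le> ennreal (1 + 1 / (p - 1))"
proof -
  have pw: "ennreal (indicator {0<..} u * frac (1 / u) powr p)
      \<le> ennreal (indicator {0..1} u) + ennreal (u powr (-p)) * indicator {1..} u" for u :: real
  proof (cases "u \<le> 0")
    case True then show ?thesis by simp
  next
    case False
    show ?thesis
    proof (cases "u \<le> 1")
      case True
      have "frac (1 / u) powr p \<le> 1 powr p"
        using p frac_lt_1[of "1/u"] by (intro powr_mono2) auto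
      then have "ennreal (indicator {0<..} u * frac (1 / u) powr p) \<le> ennreal (indicator {0..1} u)"
        using True False by (intro ennreal_leI) auto
      then show ?thesis by (rule order_trans) simp
    next
      case u1: False
      have "frac (1 / u) = 1 / u" using u1 by (intro frac_eq_id) auto
      then have "frac (1 / u) powr p = u powr (-p)" using u1 by (simp add: powr_divide powr_minus_divide)
      then have "ennreal (indicator {0<..} u * frac (1 / u) powr p) = ennreal (u powr (-p)) * indicator {1..} u"
        using u1 by simp
      then show ?thesis by simp
    qed
  qed
  have "(\<integral>\<^sup>+ u. ennreal (indicator {0<..} u * frac (1 / u) powr p) \<partial>lborel)
        \<le> (\<integral>\<^sup>+ u. ennreal (indicator {0..1} u) + ennreal (u powr (-p)) * indicator {1..} u \<partial>lborel)"
    by (rule nn_integral_mono) (rule pw)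
  also have "\<dots> = (\<integral>\<^sup>+ u. ennreal (indicator {0..1::real} u) \<partial>lborel) + (\<integral>\<^sup>+ u. ennreal (u powr (-p)) * indicator {1..} u \<partial>lborel)"
    by (subst nn_integral_add) auto
  also have "(\<integral>\<^sup>+ u. ennreal (indicator {0..1::real} u) \<partial>lborel) = 1"
    by (simp add: ennreal_indicator nn_integral_indicator)
  also have "(\<integral>\<^sup>+ u. ennreal (u powr (-p)) * indicator {1..} u \<partial>lborel) = ennreal (1 / (p - 1))"
  proof -
    have "((\<lambda>x. x powr (-p)) has_integral -(1 powr (-p + 1)) / (-p + 1)) {1..}"
      by (rule has_integral_powr_to_inf) (use p in auto)
    moreover have "-(1 powr (-p + 1)) / (-p + 1) = 1 / (p - 1)"
      using p by (simp add: field_simps)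
    ultimately have h: "((\<lambda>x. x powr (-p)) has_integral 1 / (p - 1)) {1..}"
      by simp
    show ?thesis
      by (rule nn_integral_has_integral_lebesgue'[OF _ h]) simp
  qed
  finally show ?thesis using p by simp
qed

lemma gk_Pf:
  assumes gk: "good_kernel f f'" and x: "x > 0"
  shows "summable (\<lambda>n. f (real (Suc n) * x))"
    and "set_integrable lebesgue {0<..} (\<lambda>t. complex_of_real (rho1 (x / t)) * f' t)"
    and "Pf f x = (LINT t:{0<..}|lebesgue. complex_of_real (rho1 (x / t)) * f' t)"
    and "(LINT t:{0<..}|lebesgue. complex_of_real (rho1 (x / t)) * f' t)
           = (LINT t:{0<..}|lebesgue. complex_of_real (frac (t / x)) * f' t)"
    and "Pf f x = (LINT t:{0<..}|lebesgue. frac (t / x) *\<^sub>R f' t)"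
    and "(\<lambda>n. f (real (Suc n) * x)) sums (Pf f x + complex_of_real (1 / x) * (LINT t:{0<..}|lebesgue. f t))"
proof -
  have ha: "(\<lambda>t. frac (t / x) *\<^sub>R f' t) absolutely_integrable_on {0<..}"
    by (rule gk_pointwise(1)[OF gk x])
  have s0: "(\<lambda>n. f ((real n + 1) * x)) sums
           (integral {0<..} (\<lambda>t. frac (t / x) *\<^sub>R f' t) + (1 / x) *\<^sub>R integral {0<..} f)"
    by (rule gk_pointwise(2)[OF gk x])
  have fe: "(\<lambda>n. f (real (Suc n) * x)) = (\<lambda>n. f ((real n + 1) * x))"
    by (simp add: add.commute)
  have i1: "integral {0<..} (\<lambda>t. frac (t / x) *\<^sub>R f' t) = (LINT t:{0<..}|lebesgue. frac (t / x) *\<^sub>R f' t)"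
    using set_lebesgue_integral_eq_integral(2)[OF ha] by simp
  have i2: "integral {0<..} f = (LINT t:{0<..}|lebesgue. f t)"
    using set_lebesgue_integral_eq_integral(2)[OF gk_fabs[OF gk]] by simp
  have s1: "(\<lambda>n. f (real (Suc n) * x)) sums
           ((LINT t:{0<..}|lebesgue. frac (t / x) *\<^sub>R f' t) + complex_of_real (1 / x) * (LINT t:{0<..}|lebesgue. f t))"
    using s0 unfolding fe i1 i2 by (simp add: scaleR_conv_of_real)
  show "summable (\<lambda>n. f (real (Suc n) * x))" using s1 by (rule sums_summable)
  have P: "Pf f x = (LINT t:{0<..}|lebesgue. frac (t / x) *\<^sub>R f' t)"
    unfolding Pf_def using sums_unique[OF s1] by (metis add_diff_cancel_right')
  then show "Pf f x = (LINT t:{0<..}|lebesgue. frac (t / x) *\<^sub>R f' t)" .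
  show "(\<lambda>n. f (real (Suc n) * x)) sums (Pf f x + complex_of_real (1 / x) * (LINT t:{0<..}|lebesgue. f t))"
    using s1 unfolding P .
  have eqr: "complex_of_real (rho1 (x / t)) * f' t = frac (t / x) *\<^sub>R f' t" if "t \<in> {0<..}" for t
    using that x by (simp add: rho1_def scaleR_conv_of_real)
  have eqf: "complex_of_real (frac (t / x)) * f' t = frac (t / x) *\<^sub>R f' t" for t
    by (simp add: scaleR_conv_of_real)
  show "set_integrable lebesgue {0<..} (\<lambda>t. complex_of_real (rho1 (x / t)) * f' t)"
  proof -
    have "set_integrable lebesgue {0<..} (\<lambda>t. complex_of_real (rho1 (x / t)) * f' t)
          = set_integrable lebesgue {0<..} (\<lambda>t. frac (t / x) *\<^sub>R f' t)"
      by (rule set_integrable_cong[OF refl refl]) (rule eqr)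
    then show ?thesis using ha by simp
  qed
  have L1: "(LINT t:{0<..}|lebesgue. complex_of_real (rho1 (x / t)) * f' t) = (LINT t:{0<..}|lebesgue. frac (t / x) *\<^sub>R f' t)"
    by (rule set_lebesgue_integral_cong) (use eqr in auto)
  then show "Pf f x = (LINT t:{0<..}|lebesgue. complex_of_real (rho1 (x / t)) * f' t)" using P by simp
  show "(LINT t:{0<..}|lebesgue. complex_of_real (rho1 (x / t)) * f' t)
           = (LINT t:{0<..}|lebesgue. complex_of_real (frac (t / x)) * f' t)"
    unfolding L1 eqf ..
qed

lemma gk_Pf_bound:
  assumes gk: "good_kernel f f'" and x: "x > 0"
  shows "norm (Pf f x) \<le> (LINT t:{0<..}|lebesgue. frac (t / x) * norm (f' t))"
    and "(LINT t:{0<..}|lebesgue. frac (t / x) * norm (f' t)) \<le> (LINT t:{0<..}|lebesgue. norm (f' t))"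
    and "set_integrable lebesgue {0<..} (\<lambda>t. frac (t / x) * norm (f' t))"
proof -
  have ha: "set_integrable lebesgue {0<..} (\<lambda>t. frac (t / x) *\<^sub>R f' t)"
    using gk_pointwise(1)[OF gk x] by simp
  have n: "norm (frac (t / x) *\<^sub>R f' t) = frac (t / x) * norm (f' t)" for t
    by simp
  show si: "set_integrable lebesgue {0<..} (\<lambda>t. frac (t / x) * norm (f' t))"
    using set_integrable_norm[OF ha] unfolding n .
  show "norm (Pf f x) \<le> (LINT t:{0<..}|lebesgue. frac (t / x) * norm (f' t))"
    using set_integral_norm_bound[OF ha] unfolding n gk_Pf(5)[OF gk x, symmetric] .
  have f'a: "set_integrable lebesgue {0<..} (\<lambda>t. norm (f' t))"
    using set_integrable_norm[OF gk_f'_abs(2)[OF gk, of 0]] by simp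
  show "(LINT t:{0<..}|lebesgue. frac (t / x) * norm (f' t)) \<le> (LINT t:{0<..}|lebesgue. norm (f' t))"
    by (rule set_integral_mono[OF si f'a]) (simp add: frac_lt_1 less_imp_le mult_left_le_one_le)
qed

lemma gk_Pf_measurable:
  assumes gk: "good_kernel f f'"
  shows "Pf f \<in> borel_measurable (restrict_space lebesgue {0<..})"
proof (rule borel_measurable_LIMSEQ_metric)
  define c where "c = (LINT t:{0<..}|lebesgue. f t)"
  let ?F = "\<lambda>N x. (\<Sum>n<N. f (real (Suc n) * x)) - complex_of_real (1 / x) * c"
  show "?F N \<in> borel_measurable (restrict_space lebesgue {0<..})" for N
  proof (rule continuous_imp_measurable_on_sets_lebesgue)
    have "continuous_on {0<..} (\<lambda>x. f (real (Suc n) * x))" for n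
      by (rule continuous_on_compose2[OF gk_cont[OF gk]]) (auto intro!: continuous_intros)
    then show "continuous_on {0<..} (?F N)"
      by (intro continuous_intros) auto
  qed auto
  show "(\<lambda>N. ?F N x) \<longlonglongrightarrow> Pf f x" if "x \<in> space (restrict_space lebesgue {0<..})" for x
  proof -
    have x: "x > 0" using that by simp
    have "(\<lambda>N. \<Sum>n<N. f (real (Suc n) * x)) \<longlonglongrightarrow> Pf f x + complex_of_real (1 / x) * c"
      using gk_Pf(6)[OF gk x] unfolding sums_def c_def .
    then have "(\<lambda>N. ?F N x) \<longlonglongrightarrow> (Pf f x + complex_of_real (1 / x) * c) - complex_of_real (1 / x) * c"
      by (intro tendsto_intros)
    then show ?thesis by simp
  qed
qed

lemma inner_affine:
  fixes p t :: real
  assumes t: "t > 0"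
  shows "(\<integral>\<^sup>+ x. ennreal (indicator {0<..} x * frac (t / x) powr p) \<partial>lborel)
       = ennreal t * (\<integral>\<^sup>+ u. ennreal (indicator {0<..} u * frac (1 / u) powr p) \<partial>lborel)"
proof -
  have m: "(\<lambda>x. ennreal (indicator {0<..} x * frac (t / x) powr p)) \<in> borel_measurable borel"
    unfolding frac_def by measurable
  have "(\<integral>\<^sup>+ x. ennreal (indicator {0<..} x * frac (t / x) powr p) \<partial>lborel)
     = ennreal \<bar>t\<bar> * (\<integral>\<^sup>+ x. ennreal (indicator {0<..} (0 + t * x) * frac (t / (0 + t * x)) powr p) \<partial>lborel)"
    using nn_integral_real_affine[OF m, of t 0] t by simp
  also have "(\<integral>\<^sup>+ x. ennreal (indicator {0<..} (0 + t * x) * frac (t / (0 + t * x)) powr p) \<partial>lborel)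
      = (\<integral>\<^sup>+ u. ennreal (indicator {0<..} u * frac (1 / u) powr p) \<partial>lborel)"
  proof (rule nn_integral_cong)
    fix u :: real
    have "indicator {0<..} (0 + t * u) = (indicator {0<..} u :: real)"
      using t by (auto simp: indicator_def zero_less_mult_iff)
    moreover have "t / (0 + t * u) = 1 / u" using t by auto
    ultimately show "ennreal (indicator {0<..} (0 + t * u) * frac (t / (0 + t * u)) powr p)
        = ennreal (indicator {0<..} u * frac (1 / u) powr p)" by simp
  qed
  finally show ?thesis using t by simp
qed

lemma gk_Lp:
  assumes gk: "good_kernel f f'" and p: "p > 1"
  shows "set_integrable lebesgue {0<..} (\<lambda>x. norm (Pf f x) powr p)"
    and "set_integrable lebesgue {0<..} (\<lambda>t. t powr (1 / p) * norm (f' t))"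
    and "set_integrable lebesgue {0<..} (\<lambda>x. \<bar>rho1 x\<bar> powr p)"
    and "Lp_norm p (Pf f) \<le> nu (1 / p) f' * Lp_norm p rho1"
proof -
  define S where "S = ({0<..} :: real set)"
  define ff where "ff t = indicator S t * norm (f' t)" for t
  have ffm[measurable]: "ff \<in> borel_measurable borel"
  proof -
    have cont: "continuous_on S f'"
      unfolding S_def by (rule continuous_on_subset[OF gk_f'cont[OF gk]]) auto
    have "(\<lambda>t. indicator S t *\<^sub>R f' t) \<in> borel_measurable borel"
      by (rule borel_measurable_continuous_on_indicator) (use cont in \<open>auto simp: S_def\<close>)
    then have "(\<lambda>t. norm (indicator S t *\<^sub>R f' t)) \<in> borel_measurable borel"
      by measurable
    moreover have "(\<lambda>t. norm (indicator S t *\<^sub>R f' t)) = ff"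
      by (auto simp: ff_def indicator_def)
    ultimately show ?thesis by simp
  qed
  have ff0: "ff t \<ge> 0" for t by (simp add: ff_def)
  have ffn: "t \<notin> S \<Longrightarrow> ff t = 0" for t by (simp add: ff_def)
  define W where "W = nu (1 / p) f'"
  have wi: "set_integrable lebesgue S (\<lambda>t. t powr (1 / p) * norm (f' t))"
    unfolding S_def by (rule gk_f'_abs(1)[OF gk]) (use p in auto)
  then show "set_integrable lebesgue {0<..} (\<lambda>t. t powr (1 / p) * norm (f' t))"
    by (simp add: S_def)
  have Wnn0: "(\<integral>\<^sup>+ t. ennreal (indicator S t * (t powr (1 / p) * norm (f' t))) \<partial>lborel) = ennreal W"
    unfolding W_def nu_def S_def by (rule set_integrable_nn_eq[OF wi[unfolded S_def]]) auto
  have Wnn: "(\<integral>\<^sup>+ t. ennreal (t powr (1 / p) * ff t) \<partial>lborel) = ennreal W"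
    unfolding Wnn0[symmetric] by (rule nn_integral_cong) (simp add: ff_def)
  have W0: "W \<ge> 0"
    unfolding W_def nu_def set_lebesgue_integral_def by (rule integral_nonneg_AE) (auto simp: indicator_def)
  define Rr where "Rr = (LINT u:S|lebesgue. \<bar>rho1 u\<bar> powr p)"
  have rho_eq: "indicator S u * \<bar>rho1 u\<bar> powr p = indicator {0<..} u * frac (1 / u) powr p" for u
    by (simp add: S_def rho1_def)
  have rm: "(\<lambda>u. indicator S u * \<bar>rho1 u\<bar> powr p) \<in> borel_measurable lebesgue"
    unfolding rho_eq by (rule borel_to_lebesgue[OF rho1_measurable])
  have rfin: "(\<integral>\<^sup>+ u. ennreal (indicator S u * \<bar>rho1 u\<bar> powr p) \<partial>lborel) \<le> ennreal (1 + 1 / (p - 1))"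
    unfolding rho_eq by (rule rho1_nn_finite[OF p])
  have ri: "set_integrable lebesgue S (\<lambda>u. \<bar>rho1 u\<bar> powr p)"
    by (rule nn_to_set_integrable(1)[OF rm _ rfin]) simp
  then show "set_integrable lebesgue {0<..} (\<lambda>x. \<bar>rho1 x\<bar> powr p)" by (simp add: S_def)
  have Rnn0: "(\<integral>\<^sup>+ u. ennreal (indicator S u * \<bar>rho1 u\<bar> powr p) \<partial>lborel) = ennreal Rr"
    unfolding Rr_def by (rule nn_to_set_integrable(2)[OF rm _ rfin]) simp
  have Rnn: "(\<integral>\<^sup>+ u. ennreal (indicator {0<..} u * frac (1 / u) powr p) \<partial>lborel) = ennreal Rr"
    using Rnn0 unfolding rho_eq .
  have R0: "Rr \<ge> 0"
    unfolding Rr_def set_lebesgue_integral_def by (rule integral_nonneg_AE) (auto simp: indicator_def)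
  define K where "K x t = frac (t / x) powr p * (t powr (1 / p - 1) * ff t)" for x t
  have PW: "ennreal (norm (Pf f x) powr p) \<le> (\<integral>\<^sup>+ t. ennreal (W powr (p - 1) * K x t) \<partial>lborel)"
    if x: "x > 0" for x
  proof -
    define G where "G = (LINT t:{0<..}|lebesgue. frac (t / x) * norm (f' t))"
    define g where "g t = frac (t / x) * t powr (-1 / p)" for t
    define w where "w t = t powr (1 / p) * ff t" for t
    have gm: "g \<in> borel_measurable lborel" unfolding g_def frac_def by measurable
    have wm: "w \<in> borel_measurable lborel" unfolding w_def by measurable
    have g0: "g t \<ge> 0" for t by (simp add: g_def)
    have w0: "w t \<ge> 0" for t by (simp add: w_def ff0)
    have gw: "g t * w t = indicator {0<..} t * (frac (t / x) * norm (f' t))" for t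
    proof (cases "t > 0")
      case True
      have one: "t powr (-1 / p) * t powr (1 / p) = 1"
        using True by (simp add: powr_add[symmetric])
      have "g t * w t = frac (t / x) * ff t * (t powr (-1 / p) * t powr (1 / p))"
        unfolding g_def w_def by (simp only: mult_ac)
      then show ?thesis using True unfolding one by (simp add: ff_def S_def)
    next
      case False
      then show ?thesis by (simp add: w_def ff_def S_def)
    qed
    have Gi: "set_integrable lebesgue {0<..} (\<lambda>t. frac (t / x) * norm (f' t))"
      by (rule gk_Pf_bound(3)[OF gk x])
    have G: "(\<integral>\<^sup>+ t. ennreal (g t * w t) \<partial>lborel) = ennreal G"
      unfolding gw G_def by (rule set_integrable_nn_eq[OF Gi]) simp
    have G0: "G \<ge> 0"
      unfolding G_def set_lebesgue_integral_def by (rule integral_nonneg_AE) (auto simp: indicator_def)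
    have J: "ennreal (G powr p) \<le> ennreal (W powr (p - 1)) * (\<integral>\<^sup>+ t. ennreal (g t powr p * w t) \<partial>lborel)"
      by (rule jensen_nn[OF p gm wm g0 w0 _ W0 G G0]) (simp add: Wnn w_def)
    have gpw: "g t powr p * w t = K x t" for t
    proof (cases "t > 0")
      case True
      have "(t powr (-1 / p)) powr p = t powr (-1)"
        using p by (simp add: powr_powr)
      then have "g t powr p = frac (t / x) powr p * t powr (-1)"
        unfolding g_def by (simp add: powr_mult)
      moreover have "t powr (-1) * t powr (1 / p) = t powr (1 / p - 1)"
        using True powr_add[of t "-1" "1 / p"] by (simp add: add.commute)
      ultimately show ?thesis unfolding K_def w_def
        by (metis (no_types, lifting) mult.assoc)
    next
      case False
      then show ?thesis by (simp add: K_def w_def ff_def S_def)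
    qed
    have "norm (Pf f x) \<le> G" unfolding G_def by (rule gk_Pf_bound(1)[OF gk x])
    then have "norm (Pf f x) powr p \<le> G powr p"
      using p by (intro powr_mono2) auto
    then have "ennreal (norm (Pf f x) powr p) \<le> ennreal (G powr p)" by (rule ennreal_leI)
    also note J
    also have "ennreal (W powr (p - 1)) * (\<integral>\<^sup>+ t. ennreal (g t powr p * w t) \<partial>lborel)
        = (\<integral>\<^sup>+ t. ennreal (W powr (p - 1)) * ennreal (K x t) \<partial>lborel)"
      unfolding gpw by (rule nn_integral_cmult[symmetric]) (simp add: K_def frac_def)
    also have "\<dots> = (\<integral>\<^sup>+ t. ennreal (W powr (p - 1) * K x t) \<partial>lborel)"
      by (rule nn_integral_cong) (simp add: ennreal_mult')
    finally show ?thesis .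
  qed
  define F where "F x t = indicator S x * (W powr (p - 1) * K x t)" for x t
  have Fm0: "(\<lambda>(x, t). ennreal (F x t)) \<in> borel_measurable (borel \<Otimes>\<^sub>M borel)"
    unfolding F_def K_def frac_def S_def by measurable
  have Fm: "(\<lambda>(x, t). ennreal (F x t)) \<in> borel_measurable (lborel \<Otimes>\<^sub>M lborel)"
  proof -
    have e: "sets (lborel \<Otimes>\<^sub>M lborel) = sets (borel \<Otimes>\<^sub>M (borel :: real measure))"
      by (rule sets_pair_measure_cong) simp_all
    show ?thesis using Fm0 measurable_cong_sets[OF e refl] by simp
  qed
  have Pm[measurable]: "Pf f \<in> borel_measurable (restrict_space lebesgue S)"
    unfolding S_def by (rule gk_Pf_measurable[OF gk])
  have Qm: "(\<lambda>x. indicator S x * norm (Pf f x) powr p) \<in> borel_measurable lebesgue"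
  proof -
    have "(\<lambda>x. norm (Pf f x) powr p) \<in> borel_measurable (restrict_space lebesgue S)" by measurable
    then have "(\<lambda>x. indicator S x *\<^sub>R (norm (Pf f x) powr p)) \<in> borel_measurable lebesgue"
      by (subst (asm) borel_measurable_restrict_space_iff) (auto simp: S_def)
    then show ?thesis by simp
  qed
  have step1: "(\<integral>\<^sup>+ x. ennreal (indicator S x * norm (Pf f x) powr p) \<partial>lborel)
      \<le> (\<integral>\<^sup>+ x. (\<integral>\<^sup>+ t. ennreal (F x t) \<partial>lborel) \<partial>lborel)"
  proof (rule nn_integral_mono)
    fix x
    show "ennreal (indicator S x * norm (Pf f x) powr p) \<le> (\<integral>\<^sup>+ t. ennreal (F x t) \<partial>lborel)"
    proof (cases "x \<in> S")
      case True
      then have x: "x > 0" by (simp add: S_def)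
      show ?thesis using PW[OF x] True by (simp add: F_def)
    next
      case False
      then show ?thesis by simp
    qed
  qed
  have step2: "(\<integral>\<^sup>+ x. (\<integral>\<^sup>+ t. ennreal (F x t) \<partial>lborel) \<partial>lborel)
      = (\<integral>\<^sup>+ t. (\<integral>\<^sup>+ x. ennreal (F x t) \<partial>lborel) \<partial>lborel)"
    using lborel_pair.Fubini'[OF Fm] by simp
  have step3: "(\<integral>\<^sup>+ x. ennreal (F x t) \<partial>lborel) = ennreal (W powr (p - 1) * Rr * (t powr (1 / p) * ff t))" for t
  proof (cases "t > 0")
    case False
    then have "ff t = 0" by (intro ffn) (simp add: S_def)
    then show ?thesis by (simp add: F_def K_def)
  next
    case True
    define c where "c = W powr (p - 1) * (t powr (1 / p - 1) * ff t)"
    have c0: "c \<ge> 0" by (simp add: c_def ff0)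
    have Fe: "ennreal (F x t) = ennreal c * ennreal (indicator {0<..} x * frac (t / x) powr p)" for x
    proof -
      have "F x t = c * (indicator {0<..} x * frac (t / x) powr p)"
        unfolding F_def K_def c_def S_def by (simp only: mult_ac)
      then show ?thesis using c0 by (simp add: ennreal_mult')
    qed
    have "(\<integral>\<^sup>+ x. ennreal (F x t) \<partial>lborel)
        = (\<integral>\<^sup>+ x. ennreal c * ennreal (indicator {0<..} x * frac (t / x) powr p) \<partial>lborel)"
      unfolding Fe ..
    also have "\<dots> = ennreal c * (\<integral>\<^sup>+ x. ennreal (indicator {0<..} x * frac (t / x) powr p) \<partial>lborel)"
      by (rule nn_integral_cmult) (unfold frac_def, measurable)
    also have "\<dots> = ennreal c * (ennreal t * ennreal Rr)"
      unfolding inner_affine[OF True] Rnn ..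
    also have "\<dots> = ennreal (c * t * Rr)"
      using c0 True R0 by (simp add: ennreal_mult mult.assoc)
    also have "c * t * Rr = W powr (p - 1) * Rr * (t powr (1 / p) * ff t)"
    proof -
      have "t powr (1 / p - 1) * t = t powr (1 / p)"
        using True powr_add[of t "1 / p - 1" 1] by simp
      then show ?thesis unfolding c_def by (metis (no_types, lifting) mult.assoc mult.commute)
    qed
    finally show ?thesis .
  qed
  have step4: "(\<integral>\<^sup>+ t. ennreal (W powr (p - 1) * Rr * (t powr (1 / p) * ff t)) \<partial>lborel)
      = ennreal (W powr (p - 1) * Rr) * ennreal W"
  proof -
    have "(\<integral>\<^sup>+ t. ennreal (W powr (p - 1) * Rr * (t powr (1 / p) * ff t)) \<partial>lborel)
        = (\<integral>\<^sup>+ t. ennreal (W powr (p - 1) * Rr) * ennreal (t powr (1 / p) * ff t) \<partial>lborel)"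
      by (rule nn_integral_cong) (use R0 in \<open>simp add: ennreal_mult'\<close>)
    also have "\<dots> = ennreal (W powr (p - 1) * Rr) * (\<integral>\<^sup>+ t. ennreal (t powr (1 / p) * ff t) \<partial>lborel)"
      by (rule nn_integral_cmult) measurable
    finally show ?thesis unfolding Wnn .
  qed
  have Wp: "W powr (p - 1) * Rr * W = W powr p * Rr"
  proof (cases "W = 0")
    case True then show ?thesis by simp
  next
    case False
    then have "W powr (p - 1) * W = W powr p" using W0 powr_add[of W "p - 1" 1] by simp
    then show ?thesis by (metis mult.assoc mult.commute)
  qed
  have Qle: "(\<integral>\<^sup>+ x. ennreal (indicator S x * norm (Pf f x) powr p) \<partial>lborel) \<le> ennreal (W powr p * Rr)"
  proof -
    note step1
    also note step2
    also have "(\<integral>\<^sup>+ t. (\<integral>\<^sup>+ x. ennreal (F x t) \<partial>lborel) \<partial>lborel)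
       = (\<integral>\<^sup>+ t. ennreal (W powr (p - 1) * Rr * (t powr (1 / p) * ff t)) \<partial>lborel)"
      by (rule nn_integral_cong) (rule step3)
    also note step4
    also have "ennreal (W powr (p - 1) * Rr) * ennreal W = ennreal (W powr p * Rr)"
      using W0 R0 Wp by (simp add: ennreal_mult[symmetric])
    finally show ?thesis .
  qed
  have si: "set_integrable lebesgue S (\<lambda>x. norm (Pf f x) powr p)"
    by (rule nn_to_set_integrable(1)[OF Qm _ Qle]) simp
  then show "set_integrable lebesgue {0<..} (\<lambda>x. norm (Pf f x) powr p)" by (simp add: S_def)
  define Ip where "Ip = (LINT x:S|lebesgue. norm (Pf f x) powr p)"
  have Qeq: "(\<integral>\<^sup>+ x. ennreal (indicator S x * norm (Pf f x) powr p) \<partial>lborel) = ennreal Ip"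
    unfolding Ip_def by (rule nn_to_set_integrable(2)[OF Qm _ Qle]) simp
  have Ip_le: "Ip \<le> W powr p * Rr"
    using Qle unfolding Qeq using W0 R0 by (subst (asm) ennreal_le_iff) auto
  have Ip0: "Ip \<ge> 0"
    unfolding Ip_def set_lebesgue_integral_def by (rule integral_nonneg_AE) (auto simp: indicator_def)
  have "Lp_norm p (Pf f) = Ip powr (1 / p)"
    unfolding Lp_norm_def Ip_def S_def ..
  also have "\<dots> \<le> (W powr p * Rr) powr (1 / p)"
    using Ip_le Ip0 p by (intro powr_mono2) auto
  also have "\<dots> = W * Rr powr (1 / p)"
    using p W0 by (simp add: powr_mult powr_powr powr_one)
  also have "W = nu (1 / p) f'" by (simp add: W_def)
  also have "Rr powr (1 / p) = Lp_norm p rho1"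
    unfolding Lp_norm_def Rr_def S_def by simp
  finally show "Lp_norm p (Pf f) \<le> nu (1 / p) f' * Lp_norm p rho1" .
qed

theorem mainTheorem9:
  fixes f f' :: "real \<Rightarrow> complex"
  assumes "good_kernel f f'"
  shows "(AE x in lebesgue. x > 0 \<longrightarrow>
            summable (\<lambda>n. f (real (Suc n) * x)) \<and>
            set_integrable lebesgue {0<..} (\<lambda>t. complex_of_real (rho1 (x / t)) * f' t) \<and>
            Pf f x = T_op f' rho1 x \<and>
            T_op f' rho1 x = (LINT t:{0<..}|lebesgue. complex_of_real (rho1 (x / t)) * f' t) \<and>
            (LINT t:{0<..}|lebesgue. complex_of_real (rho1 (x / t)) * f' t)
              = (LINT t:{0<..}|lebesgue. complex_of_real (frac (t / x)) * f' t)) \<and>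
         (\<forall>p::real. 1 < p \<longrightarrow>
            set_integrable lebesgue {0<..} (\<lambda>x. norm (Pf f x) powr p) \<and>
            set_integrable lebesgue {0<..} (\<lambda>t. t powr (1 / p) * norm (f' t)) \<and>
            set_integrable lebesgue {0<..} (\<lambda>x. \<bar>rho1 x\<bar> powr p) \<and>
            Lp_norm p (Pf f) \<le> nu (1 / p) f' * Lp_norm p rho1) \<and>
         Pf f \<in> borel_measurable (restrict_space lebesgue {0<..}) \<and>
         (\<exists>C. AE x in lebesgue. x > 0 \<longrightarrow> norm (Pf f x) \<le> C)"
proof (intro conjI)
  note gk = assms
  show "AE x in lebesgue. x > 0 \<longrightarrow>
            summable (\<lambda>n. f (real (Suc n) * x)) \<and>
            set_integrable lebesgue {0<..} (\<lambda>t. complex_of_real (rho1 (x / t)) * f' t) \<and>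
            Pf f x = T_op f' rho1 x \<and>
            T_op f' rho1 x = (LINT t:{0<..}|lebesgue. complex_of_real (rho1 (x / t)) * f' t) \<and>
            (LINT t:{0<..}|lebesgue. complex_of_real (rho1 (x / t)) * f' t)
              = (LINT t:{0<..}|lebesgue. complex_of_real (frac (t / x)) * f' t)"
  proof (rule AE_I2, intro impI conjI)
    fix x :: real assume x: "x > 0"
    show "summable (\<lambda>n. f (real (Suc n) * x))" by (rule gk_Pf(1)[OF gk x])
    show "set_integrable lebesgue {0<..} (\<lambda>t. complex_of_real (rho1 (x / t)) * f' t)"
      by (rule gk_Pf(2)[OF gk x])
    show "Pf f x = T_op f' rho1 x" unfolding T_op_def by (rule gk_Pf(3)[OF gk x])
    show "T_op f' rho1 x = (LINT t:{0<..}|lebesgue. complex_of_real (rho1 (x / t)) * f' t)"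
      unfolding T_op_def ..
    show "(LINT t:{0<..}|lebesgue. complex_of_real (rho1 (x / t)) * f' t)
              = (LINT t:{0<..}|lebesgue. complex_of_real (frac (t / x)) * f' t)"
      by (rule gk_Pf(4)[OF gk x])
  qed
  show "\<forall>p::real. 1 < p \<longrightarrow>
            set_integrable lebesgue {0<..} (\<lambda>x. norm (Pf f x) powr p) \<and>
            set_integrable lebesgue {0<..} (\<lambda>t. t powr (1 / p) * norm (f' t)) \<and>
            set_integrable lebesgue {0<..} (\<lambda>x. \<bar>rho1 x\<bar> powr p) \<and>
            Lp_norm p (Pf f) \<le> nu (1 / p) f' * Lp_norm p rho1"
    using gk_Lp[OF gk] by blast
  show "Pf f \<in> borel_measurable (restrict_space lebesgue {0<..})"
    by (rule gk_Pf_measurable[OF gk])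
  show "\<exists>C. AE x in lebesgue. x > 0 \<longrightarrow> norm (Pf f x) \<le> C"
  proof (intro exI AE_I2 impI)
    fix x :: real assume x: "x > 0"
    show "norm (Pf f x) \<le> (LINT t:{0<..}|lebesgue. norm (f' t))"
      using gk_Pf_bound(1,2)[OF gk x] by (rule order_trans)
  qed
qed

end
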